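(* Let $\Sigma$ be a system as in the context and let $R\in\mathbb R^{r\times n}$ be such that $\mathcal R_{\mathrm{bis}}=\ker([R\ \ -R])\subseteq\mathbb R^n\times\mathbb R^n$ is total. Then $\mathcal R_{\mathrm{bis}}$ is a stochastic bisimulation relation between $\Sigma$ and itself if and only if $A\ker(R)\subseteq\ker(R)\subseteq\ker(C)$ and $\ker(R)\cap\mathrm{im}(\mathcal{R}each(A,G))=\{0\}$.
   Context: $\Sigma$: $x(t+1)=Ax(t)+Bu(t)+Gw(t)$, $y(t)=Cx(t)+\nu(t)$, $t\in\mathbb N$, $x\in\mathbb R^n$, $u\in\mathbb R^m$, $w\in\mathbb R^l$, $y,\nu\in\mathbb R^p$, where $(w(t))_t$ is i.i.d. $\mathcal N(\mu,I_l)$, $(\nu(t))_t$ is i.i.d. $\mathcal N(0,\Psi)$, mutually independent. For a deterministic initial state $x^0$ and deterministic input $\mathbf u:\mathbb N\to\mathbb R^m$, $\mathbf x|_{x^0,\mathbf u}(t)=A^tx^0+\sum_{\tau=0}^{t-1}A^{t-1-\tau}(Bu(\tau)+Gw(\tau))$, $\mathbf y|_{x^0,\mathbf u}(t)=C\mathbf x|_{x^0,\mathbf u}(t)+\nu(t)$ (for two different initial states the processes are driven by independent copies of the noises); $\mathbf P(\cdot\mid x^0)$ is probability for the process started at $x^0$. Processes are stochastically equivalent ($\sim$) if all finite-dimensional joint distributions coincide. $\mathrm{supp}(v)=\{z:\mathbf P(v\in B_\rho(z))>0\ \forall\rho>0\}$. For a relation $\mathcal R\subseteq\mathbb R^n\times\mathbb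 R^n$: $\mathcal R(X_1)=\{x_2:\exists x_1\in X_1,(x_1,x_2)\in\mathcal R\}$, $\mathcal R^{-1}(X_2)=\{x_1:\exists x_2\in X_2,(x_1,x_2)\in\mathcal R\}$; total means $\mathcal R(\mathbb R^{n})=\mathbb R^{n}$ and $\mathcal R^{-1}(\mathbb R^{n})=\mathbb R^{n}$. A subspace $\mathcal R$ is a stochastic bisimulation relation between $\Sigma$ and itself if for every $(x_1^0,x_2^0)\in\mathcal R$, every input $\mathbf u$ and every $t\in\mathbb N$: (i) for every measurable $X_1\subseteq\mathcal R^{-1}(\mathbb R^{n})$, $\mathbf P(\mathbf x|_{x_1^0,\mathbf u}(t)\in X_1\mid x_1^0)=\mathbf P(\mathbf x|_{x_2^0,\mathbf u}(t)\in\mathcal R(X_1\cap\mathrm{supp}(\mathbf x|_{x_1^0,\mathbf u}(t)))\mid x_2^0)$; (ii) for every measurable $X_2\subseteq\mathcal R(\mathbb R^{n})$, $\mathbf P(\mathbf x|_{x_2^0,\mathbf u}(t)\in X_2\mid x_2^0)=\mathbf P(\mathbf x|_{x_1^0,\mathbf u}(t)\in\mathcal R^{-1}(X_2\cap\mathrm{supp}(\mathbf x|_{x_2^0,\mathbf u}(t)))\mid x_1^0)$; (iii) $\mathbf y|_{x_1^0,\mathbf u}\sim\mathbf y|_{x_2^0,\mathbf u}$. $\mathcal{R}each(A,G)=[G\ AG\ \cdots\ A^{n-1}G]$. *)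

theory Defs
  imports "HOL-Analysis.Analysis" "HOL-Probability.Probability"
begin

fun mat_pow :: "real^'n^'n \<Rightarrow> nat \<Rightarrow> real^'n^'n" where
  "mat_pow A 0 = mat 1"
| "mat_pow A (Suc k) = A ** mat_pow A k"

text \<open>Underlying probability space: an i.i.d. family of standard normal reals indexed by
  (time, component).  Component Inl i (i :: 'l) drives w(t), component Inr j (j :: 'p)
  drives the measurement noise.\<close>
definition noise_space :: "(nat \<times> ('l + 'p) \<Rightarrow> real) measure" where
  "noise_space = PiM UNIV (\<lambda>_. density lborel std_normal_density)"

text \<open>w(t) = mu + standard normal vector, hence i.i.d. N(mu, I_l).\<close>
definition proc_w :: "real^'l \<Rightarrow> nat \<Rightarrow> (nat \<times> ('l + 'p) \<Rightarrow> real) \<Rightarrow> real^'l" where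
  "proc_w mu t \<omega> = mu + (\<chi> i. \<omega> (t, Inl i))"

text \<open>nu(t) = L z(t) with z(t) standard normal, hence i.i.d. N(0, L L^T).\<close>
definition proc_nu :: "real^'p^'p \<Rightarrow> nat \<Rightarrow> (nat \<times> ('l + 'p) \<Rightarrow> real) \<Rightarrow> real^'p" where
  "proc_nu L t \<omega> = L *v (\<chi> j. \<omega> (t, Inr j))"

definition proc_x :: "real^'n^'n \<Rightarrow> real^'m^'n \<Rightarrow> real^'l^'n \<Rightarrow> real^'l \<Rightarrow>
    real^'n \<Rightarrow> (nat \<Rightarrow> real^'m) \<Rightarrow> nat \<Rightarrow> (nat \<times> ('l + 'p) \<Rightarrow> real) \<Rightarrow> real^'n" where
  "proc_x A B G mu x0 u t \<omega> = mat_pow A t *v x0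
     + (\<Sum>\<tau><t. mat_pow A (t - 1 - \<tau>) *v (B *v u \<tau> + G *v proc_w mu \<tau> \<omega>))"

definition proc_y :: "real^'n^'n \<Rightarrow> real^'m^'n \<Rightarrow> real^'l^'n \<Rightarrow> real^'n^'p \<Rightarrow> real^'l \<Rightarrow>
    real^'p^'p \<Rightarrow> real^'n \<Rightarrow> (nat \<Rightarrow> real^'m) \<Rightarrow> nat \<Rightarrow> (nat \<times> ('l + 'p) \<Rightarrow> real) \<Rightarrow> real^'p" where
  "proc_y A B G C mu L x0 u t \<omega> = C *v proc_x A B G mu x0 u t \<omega> + proc_nu L t \<omega>"

definition rv_supp :: "'a measure \<Rightarrow> ('a \<Rightarrow> 'b::metric_space) \<Rightarrow> 'b set" where
  "rv_supp M v = {z. \<forall>\<rho>>0. measure M {\<omega> \<in> space M. v \<omega> \<in> ball z \<rho>} > 0}"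

definition stoch_equiv :: "'a measure \<Rightarrow> (nat \<Rightarrow> 'a \<Rightarrow> 'b::topological_space) \<Rightarrow>
    (nat \<Rightarrow> 'a \<Rightarrow> 'b) \<Rightarrow> bool" where
  "stoch_equiv M y1 y2 \<longleftrightarrow> (\<forall>T. finite T \<longrightarrow>
     distr M (PiM T (\<lambda>_. borel)) (\<lambda>\<omega>. \<lambda>t\<in>T. y1 t \<omega>)
   = distr M (PiM T (\<lambda>_. borel)) (\<lambda>\<omega>. \<lambda>t\<in>T. y2 t \<omega>))"

text \<open>Stochastic bisimulation relation between Sigma and itself
  (R `` X = R(X), converse R `` X = R^{-1}(X)).\<close>
definition stoch_bisim :: "real^'n^'n \<Rightarrow> real^'m^'n \<Rightarrow> real^'l^'n \<Rightarrow> real^'n^'p \<Rightarrow> real^'l \<Rightarrow>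
    real^'p^'p \<Rightarrow> ((real^'n) \<times> (real^'n)) set \<Rightarrow> bool" where
  "stoch_bisim A B G C mu L Rel \<longleftrightarrow> subspace Rel \<and>
    (\<forall>x1 x2 u t. (x1, x2) \<in> Rel \<longrightarrow>
      (let M = (noise_space :: (nat \<times> ('l + 'p) \<Rightarrow> real) measure);
           X1p = proc_x A B G mu x1 u t; X2p = proc_x A B G mu x2 u t in
       (\<forall>X1 \<in> sets borel. X1 \<subseteq> Domain Rel \<longrightarrow>
          measure M {\<omega> \<in> space M. X1p \<omega> \<in> X1}
        = measure M {\<omega> \<in> space M. X2p \<omega> \<in> Rel `` (X1 \<inter> rv_supp M X1p)})
     \<and> (\<forall>X2 \<in> sets borel. X2 \<subseteq> Range Rel \<longrightarrow>
          measure M {\<omega> \<in> space M. X2p \<omega> \<in> X2}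
        = measure M {\<omega> \<in> space M. X1p \<omega> \<in> converse Rel `` (X2 \<inter> rv_supp M X2p)})
     \<and> stoch_equiv M (proc_y A B G C mu L x1 u) (proc_y A B G C mu L x2 u)))"

definition ker_mat :: "real^'n^'r \<Rightarrow> (real^'n) set" where
  "ker_mat R = {x. R *v x = 0}"

text \<open>The relation ker([R  -R]) as a set of pairs.\<close>
definition rel_bis :: "real^'n^'r \<Rightarrow> ((real^'n) \<times> (real^'n)) set" where
  "rel_bis R = {(x1, x2). R *v x1 - R *v x2 = 0}"

text \<open>Image of Reach(A,G) = [G AG ... A^(n-1)G], n = CARD('n).\<close>
definition reach_im :: "real^'n^'n \<Rightarrow> real^'l^'n \<Rightarrow> (real^'n) set" where
  "reach_im A G = {(\<Sum>k<CARD('n). mat_pow A k *v (G *v v k)) | v. True}"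

end

theory Submission
  imports Defs
begin


lemma ns_prob: "prob_space (noise_space :: (nat \<times> ('l::finite + 'p) \<Rightarrow> real) measure)"
  unfolding noise_space_def by (intro prob_space_PiM prob_space_normal_density) simp

lemma ns_space: "space (noise_space :: (nat \<times> ('l + 'p) \<Rightarrow> real) measure) = UNIV"
  unfolding noise_space_def by (simp add: space_PiM)

lemma ns_coord: "(\<lambda>\<omega>. \<omega> j) \<in> borel_measurable (noise_space :: (nat \<times> ('l::finite + 'p) \<Rightarrow> real) measure)"
proof -
  have "(\<lambda>\<omega>. \<omega> j) \<in> measurable (noise_space :: (nat \<times> ('l + 'p) \<Rightarrow> real) measure) (density lborel std_normal_density)"
    unfolding noise_space_def using measurable_component_singleton[of j UNIV "\<lambda>_. density lborel std_normal_density"] by blast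
  moreover have e: "sets (density lborel std_normal_density) = sets (borel::real measure)" by simp
  ultimately show ?thesis by (simp only: measurable_cong_sets[OF refl e])
qed

lemma vec_sum_axis: "(\<chi> i. f i) = (\<Sum>i\<in>UNIV. f i *\<^sub>R axis i (1::real))"
  by (simp add: vec_eq_iff axis_def sum_component if_distrib cong: if_cong)

lemma ns_vec: "(\<lambda>\<omega>. (\<chi> i. \<omega> (g i)) :: real^'k) \<in> borel_measurable (noise_space :: (nat \<times> ('l::finite + 'p) \<Rightarrow> real) measure)"
  unfolding vec_sum_axis
  by (intro borel_measurable_sum borel_measurable_scaleR ns_coord borel_measurable_const)

lemma mv_meas: "f \<in> borel_measurable M \<Longrightarrow> (\<lambda>x. (A::real^'a^'b) *v f x) \<in> borel_measurable M"
  using measurable_compose[OF _ borel_measurable_continuous_onI[OF matrix_vector_mult_linear_continuous_on]] by blast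

lemma proc_x_meas: "proc_x A B G mu x0 u t \<in> borel_measurable (noise_space :: (nat \<times> ('l::finite + 'p) \<Rightarrow> real) measure)"
  unfolding proc_x_def[abs_def] proc_w_def
  by (intro borel_measurable_add borel_measurable_sum mv_meas borel_measurable_const ns_vec)



definition Vs :: "real^'n^'n \<Rightarrow> real^'l^'n \<Rightarrow> nat \<Rightarrow> (real^'n) set" where
  "Vs A G t = {(\<Sum>k<t. mat_pow A k *v (G *v w k)) | w. True}"

lemma mat_pow_Suc_vec: "mat_pow A (Suc k) *v x = A *v (mat_pow A k *v x)"
  by (simp add: matrix_vector_mul_assoc)

lemma mv_sum: "(A::real^'a^'b) *v sum f S = (\<Sum>i\<in>S. A *v f i)"
  by (induction S rule: infinite_finite_induct) (simp_all add: matrix_vector_right_distrib)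

lemma Vs_subspace: "subspace (Vs A G t)"
  unfolding subspace_def Vs_def
proof (intro conjI ballI allI)
  show "0 \<in> {\<Sum>k<t. mat_pow A k *v (G *v w k) |w. True}"
    by (rule CollectI, rule exI[of _ "\<lambda>_. 0"]) simp
next
  fix x y assume "x \<in> {\<Sum>k<t. mat_pow A k *v (G *v w k) |w. True}" "y \<in> {\<Sum>k<t. mat_pow A k *v (G *v w k) |w. True}"
  then obtain w1 w2 where "x = (\<Sum>k<t. mat_pow A k *v (G *v w1 k))" "y = (\<Sum>k<t. mat_pow A k *v (G *v w2 k))" by auto
  then show "x + y \<in> {\<Sum>k<t. mat_pow A k *v (G *v w k) |w. True}"
    by (intro CollectI exI[of _ "\<lambda>k. w1 k + w2 k"]) (simp add: matrix_vector_right_distrib sum.distrib)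
next
  fix c :: real and x assume "x \<in> {\<Sum>k<t. mat_pow A k *v (G *v w k) |w. True}"
  then obtain w1 where "x = (\<Sum>k<t. mat_pow A k *v (G *v w1 k))" by auto
  then show "c *\<^sub>R x \<in> {\<Sum>k<t. mat_pow A k *v (G *v w k) |w. True}"
    by (intro CollectI exI[of _ "\<lambda>k. c *\<^sub>R w1 k"]) (simp add: matrix_vector_mult_scaleR scaleR_sum_right)
qed

lemma Vs_closed: "closed (Vs A G t)"
  by (rule closed_subspace[OF Vs_subspace])

lemma Vs_mono: "t \<le> s \<Longrightarrow> Vs A G t \<subseteq> Vs A G s"
proof
  fix x assume ts: "t \<le> s" and "x \<in> Vs A G t"
  then obtain w where x: "x = (\<Sum>k<t. mat_pow A k *v (G *v w k))" by (auto simp: Vs_def)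
  have "(\<Sum>k<s. mat_pow A k *v (G *v (if k < t then w k else 0))) = (\<Sum>k<t. mat_pow A k *v (G *v w k))"
  proof -
    have "(\<Sum>k<s. mat_pow A k *v (G *v (if k < t then w k else 0))) = (\<Sum>k<t. mat_pow A k *v (G *v (if k < t then w k else 0)))"
      using ts by (intro sum.mono_neutral_right) auto
    then show ?thesis by simp
  qed
  then show "x \<in> Vs A G s" unfolding Vs_def x
    by (intro CollectI exI[of _ "\<lambda>k. if k < t then w k else 0"]) simp
qed

lemma Vs_Suc: "Vs A G (Suc t) = {G *v w + A *v v | w v. v \<in> Vs A G t}"
proof -
  have e: "(\<Sum>k<Suc t. mat_pow A k *v (G *v w k)) = G *v w 0 + A *v (\<Sum>k<t. mat_pow A k *v (G *v w (Suc k)))" for w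
    by (subst sum.lessThan_Suc_shift) (simp add: mat_pow_Suc_vec mv_sum matrix_vector_mul_lid del: mat_pow.simps(2))
  show ?thesis
  proof (intro set_eqI iffI)
    fix x assume "x \<in> Vs A G (Suc t)"
    then obtain w where "x = (\<Sum>k<Suc t. mat_pow A k *v (G *v w k))" by (auto simp: Vs_def)
    then have x: "x = G *v w 0 + A *v (\<Sum>k<t. mat_pow A k *v (G *v w (Suc k)))" unfolding e .
    have "(\<Sum>k<t. mat_pow A k *v (G *v w (Suc k))) \<in> Vs A G t"
      unfolding Vs_def by (intro CollectI exI[of _ "\<lambda>k. w (Suc k)"]) simp
    then show "x \<in> {G *v w + A *v v | w v. v \<in> Vs A G t}" unfolding x by blast
  next
    fix x assume "x \<in> {G *v w + A *v v | w v. v \<in> Vs A G t}"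
    then obtain w0 w where "x = G *v w0 + A *v (\<Sum>k<t. mat_pow A k *v (G *v w k))" by (auto simp: Vs_def)
    then have "x = (\<Sum>k<Suc t. mat_pow A k *v (G *v (case k of 0 \<Rightarrow> w0 | Suc j \<Rightarrow> w j)))"
      unfolding e by simp
    then show "x \<in> Vs A G (Suc t)" unfolding Vs_def by blast
  qed
qed

lemma Vs_stable: assumes "Vs A G t = Vs A G (Suc t)" "t \<le> s" shows "Vs A G s = Vs A G t"
  using assms(2)
proof (induction s rule: dec_induct)
  case base then show ?case by simp
next
  case (step s)
  have "Vs A G (Suc s) = Vs A G (Suc t)" by (simp only: Vs_Suc step(3))
  then show ?case using assms(1) by simp
qed

lemma Vs_le_n: "Vs A G s \<subseteq> Vs A G CARD('n)" for A :: "real^'n^'n"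
proof (cases "\<exists>t<CARD('n). Vs A G t = Vs A G (Suc t)")
  case True
  then obtain t where t: "t < CARD('n)" "Vs A G t = Vs A G (Suc t)" by blast
  show ?thesis
  proof (cases "s \<le> CARD('n)")
    case True then show ?thesis by (rule Vs_mono)
  next
    case False
    then have "t \<le> s" using t by simp
    then have "Vs A G s = Vs A G t" by (rule Vs_stable[OF t(2)])
    also have "\<dots> \<subseteq> Vs A G CARD('n)" using t by (intro Vs_mono) simp
    finally show ?thesis .
  qed
next
  case False
  have "t \<le> CARD('n) \<Longrightarrow> t \<le> dim (Vs A G t)" for t
  proof (induction t)
    case 0 then show ?case by simp
  next
    case (Suc t)
    have "Vs A G t \<subset> Vs A G (Suc t)" using False Suc.prems Vs_mono[of t "Suc t" A G] by auto
    then have "dim (Vs A G t) < dim (Vs A G (Suc t))"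
      by (intro dim_psubset) (simp add: span_eq_iff[THEN iffD2, OF Vs_subspace])
    then show ?case using Suc by simp
  qed
  then have "CARD('n) \<le> dim (Vs A G CARD('n))" by simp
  then have "dim (Vs A G CARD('n)) = DIM(real^'n)" using dim_subset_UNIV_cart[of "Vs A G CARD('n)"] by simp
  then have "span (Vs A G CARD('n)) = UNIV" using dim_eq_full[of "Vs A G CARD('n)"] by simp
  then show ?thesis by (simp add: span_eq_iff[THEN iffD2, OF Vs_subspace])
qed

lemma reach_Vs: "reach_im A G = Vs A G CARD('n)" for A :: "real^'n^'n"
  unfolding reach_im_def Vs_def by simp

lemma Vs_alt: "Vs A G t = {(\<Sum>\<tau><t. mat_pow A (t - 1 - \<tau>) *v (G *v w \<tau>)) | w. True}"
proof -
  have e: "(\<Sum>\<tau><t. mat_pow A (t - 1 - \<tau>) *v (G *v w \<tau>)) = (\<Sum>k<t. mat_pow A k *v (G *v w (t - Suc k)))" for w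
    by (subst sum.nat_diff_reindex[symmetric]) (intro sum.cong refl, auto simp: Suc_diff_Suc)
  show ?thesis
  proof (intro set_eqI iffI)
    fix x assume "x \<in> Vs A G t"
    then obtain w where x: "x = (\<Sum>k<t. mat_pow A k *v (G *v w k))" by (auto simp: Vs_def)
    define w' where "w' = (\<lambda>j. w (t - Suc j))"
    have "x = (\<Sum>k<t. mat_pow A k *v (G *v w' (t - Suc k)))"
      unfolding x w'_def by (intro sum.cong refl) (simp add: Suc_diff_Suc)
    then show "x \<in> {(\<Sum>\<tau><t. mat_pow A (t - 1 - \<tau>) *v (G *v w \<tau>)) | w. True}"
      unfolding e by blast
  next
    fix x assume "x \<in> {(\<Sum>\<tau><t. mat_pow A (t - 1 - \<tau>) *v (G *v w \<tau>)) | w. True}"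
    then obtain w where "x = (\<Sum>k<t. mat_pow A k *v (G *v w (t - Suc k)))" unfolding e by blast
    then show "x \<in> Vs A G t" unfolding Vs_def by (intro CollectI exI[of _ "\<lambda>k. w (t - Suc k)"]) simp
  qed
qed



definition mx :: "real^'n^'n \<Rightarrow> real^'m^'n \<Rightarrow> real^'n \<Rightarrow> (nat \<Rightarrow> real^'m) \<Rightarrow> nat \<Rightarrow> real^'n" where
  "mx A B x u t = mat_pow A t *v x + (\<Sum>\<tau><t. mat_pow A (t - 1 - \<tau>) *v (B *v u \<tau>))"

lemma px_split: "proc_x A B G mu x u t \<omega> = mx A B x u t + (\<Sum>\<tau><t. mat_pow A (t - 1 - \<tau>) *v (G *v proc_w mu \<tau> \<omega>))"
  unfolding proc_x_def mx_def by (simp add: matrix_vector_right_distrib sum.distrib add.assoc)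

lemma px_in: "proc_x A B G mu x u t \<omega> \<in> (\<lambda>v. mx A B x u t + v) ` Vs A G t"
proof -
  have "(\<Sum>\<tau><t. mat_pow A (t - 1 - \<tau>) *v (G *v proc_w mu \<tau> \<omega>)) \<in> Vs A G t"
    unfolding Vs_alt by (intro CollectI exI[of _ "\<lambda>\<tau>. proc_w mu \<tau> \<omega>"]) simp
  then show ?thesis unfolding px_split by blast
qed

lemma normal_interval_pos:
  assumes "a < b"
  shows "0 < emeasure (density lborel std_normal_density) {a<..<b}"
proof -
  define c where "c = (1 / sqrt (2 * pi)) * exp (- (a\<^sup>2 + b\<^sup>2) / 2)"
  have cpos: "c > 0" unfolding c_def by simp
  have le: "ennreal c * indicator {a<..<b} x \<le> ennreal (std_normal_density x) * indicator {a<..<b} x" for x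
  proof (cases "x \<in> {a<..<b}")
    case True
    then have "x\<^sup>2 \<le> a\<^sup>2 + b\<^sup>2"
      by (auto simp: power2_eq_square) (smt (verit) mult_mono mult_nonneg_nonneg mult_less_cancel_left mult_le_cancel_right)
    then have "c \<le> std_normal_density x" unfolding c_def std_normal_density_def
      by (intro mult_left_mono) auto
    then show ?thesis using True by (simp add: ennreal_leI)
  qed simp
  have "emeasure (density lborel std_normal_density) {a<..<b} = (\<integral>\<^sup>+ x. ennreal (std_normal_density x) * indicator {a<..<b} x \<partial>lborel)"
    by (rule emeasure_density) auto
  also have "\<dots> \<ge> (\<integral>\<^sup>+ x. ennreal c * indicator {a<..<b} x \<partial>lborel)"
    by (intro nn_integral_mono le)
  finally have "ennreal c * emeasure lborel {a<..<b} \<le> emeasure (density lborel std_normal_density) {a<..<b}"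
    by (simp add: nn_integral_cmult_indicator)
  moreover have "0 < ennreal c * emeasure lborel {a<..<b}"
    using assms cpos by (simp add: ennreal_mult''[symmetric])
  ultimately show ?thesis by order
qed



lemma px_meas_set:
  assumes "Y \<in> sets borel"
  shows "{\<omega> \<in> space (noise_space :: (nat \<times> ('l::finite + 'p) \<Rightarrow> real) measure). proc_x A B G mu x u t \<omega> \<in> Y} \<in> sets noise_space"
proof -
  have "{\<omega> \<in> space (noise_space :: (nat \<times> ('l::finite + 'p) \<Rightarrow> real) measure). proc_x A B G mu x u t \<omega> \<in> Y}
     = proc_x A B G mu x u t -` Y \<inter> space noise_space" by auto
  then show ?thesis using measurable_sets[OF proc_x_meas assms] by simp
qed

lemma ns_emeq: "emeasure (noise_space :: (nat \<times> ('l::finite + 'p) \<Rightarrow> real) measure) Y = ennreal (measure noise_space Y)"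
proof -
  interpret prob_space "noise_space :: (nat \<times> ('l + 'p) \<Rightarrow> real) measure" by (rule ns_prob)
  show ?thesis by (rule emeasure_eq_measure)
qed

lemma ns_mono: "Y \<subseteq> Z \<Longrightarrow> Z \<in> sets noise_space \<Longrightarrow> measure (noise_space :: (nat \<times> ('l::finite + 'p) \<Rightarrow> real) measure) Y \<le> measure noise_space Z"
proof -
  interpret prob_space "noise_space :: (nat \<times> ('l + 'p) \<Rightarrow> real) measure" by (rule ns_prob)
  show "Y \<subseteq> Z \<Longrightarrow> Z \<in> sets noise_space \<Longrightarrow> ?thesis" by (rule finite_measure_mono)
qed

lemma supp_eq:
  fixes A :: "real^'n^'n" and G :: "real^'l^'n"
  shows "rv_supp (noise_space :: (nat \<times> ('l + 'p) \<Rightarrow> real) measure) (proc_x A B G mu x u t)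
       = (\<lambda>v. mx A B x u t + v) ` Vs A G t"
proof (intro set_eqI iffI)
  let ?M = "noise_space :: (nat \<times> ('l + 'p) \<Rightarrow> real) measure"
  let ?X = "proc_x A B G mu x u t"
  let ?S = "(\<lambda>v. mx A B x u t + v) ` Vs A G t"
  fix z assume z: "z \<in> rv_supp ?M ?X"
  show "z \<in> ?S"
  proof (rule ccontr)
    assume nz: "z \<notin> ?S"
    have "closed ?S" by (rule closed_translation[OF Vs_closed])
    then have "open (- ?S)" by auto
    then obtain \<rho> where \<rho>: "\<rho> > 0" "ball z \<rho> \<subseteq> - ?S" using nz open_contains_ball by blast
    have "?X \<omega> \<notin> ball z \<rho>" for \<omega>
    proof -
      have "?X \<omega> \<in> ?S" by (rule px_in)
      then show ?thesis using \<rho>(2) by (auto simp del: mem_ball)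
    qed
    then have "{\<omega> \<in> space ?M. ?X \<omega> \<in> ball z \<rho>} = {}" by blast
    moreover have "measure ?M {\<omega> \<in> space ?M. ?X \<omega> \<in> ball z \<rho>} > 0" using z \<rho>(1) unfolding rv_supp_def by (simp del: mem_ball)
    ultimately show False by (metis measure_empty order_less_irrefl)
  qed
next
  let ?N = "density lborel std_normal_density"
  let ?M = "noise_space :: (nat \<times> ('l + 'p) \<Rightarrow> real) measure"
  let ?X = "proc_x A B G mu x u t"
  let ?S = "(\<lambda>v. mx A B x u t + v) ` Vs A G t"
  fix z assume "z \<in> ?S"
  then obtain w where zw: "z = mx A B x u t + (\<Sum>\<tau><t. mat_pow A (t - 1 - \<tau>) *v (G *v w \<tau>))"
    unfolding Vs_alt by blast
  show "z \<in> rv_supp ?M ?X" unfolding rv_supp_def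
  proof (intro CollectI allI impI)
    fix \<rho> :: real assume \<rho>: "\<rho> > 0"
    have "\<forall>\<tau>. \<exists>K>0. \<forall>v. norm (mat_pow A (t - 1 - \<tau>) *v (G *v v)) \<le> norm v * K"
    proof
      fix \<tau>
      have "bounded_linear ((*v) (mat_pow A (t - 1 - \<tau>) ** G))" by simp
      then show "\<exists>K>0. \<forall>v. norm (mat_pow A (t - 1 - \<tau>) *v (G *v v)) \<le> norm v * K"
        using bounded_linear.pos_bounded by (fastforce simp: matrix_vector_mul_assoc)
    qed
    then obtain Kf where Kf: "\<And>\<tau>. Kf \<tau> > 0" "\<And>\<tau> v. norm (mat_pow A (t - 1 - \<tau>) *v (G *v v)) \<le> norm v * Kf \<tau>"
      by metis
    define S0 where "S0 = (\<Sum>\<tau><t. Kf \<tau>) * real CARD('l)"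
    have S0: "S0 \<ge> 0" unfolding S0_def using Kf(1) by (simp add: sum_nonneg less_imp_le)
    define \<delta> where "\<delta> = \<rho> / (S0 + 1)"
    have \<delta>: "\<delta> > 0" unfolding \<delta>_def using \<rho> S0 by simp
    have S0\<delta>: "S0 * \<delta> < \<rho>" unfolding \<delta>_def using \<rho> S0 by (simp add: field_simps)
    define J :: "(nat \<times> ('l + 'p)) set" where "J = {..<t} \<times> range Inl"
    define c :: "nat \<times> ('l + 'p) \<Rightarrow> real" where "c = (\<lambda>(\<tau>, s). case s of Inl i \<Rightarrow> w \<tau> $ i - mu $ i | Inr _ \<Rightarrow> 0)"
    define I where "I = (\<lambda>j. {c j - \<delta> <..< c j + \<delta>})"
    define E where "E = prod_emb UNIV (\<lambda>_. ?N) J (Pi\<^sub>E J I)"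
    have finJ: "finite J" unfolding J_def by simp
    have EM: "E \<in> sets ?M" unfolding E_def noise_space_def
      by (rule sets_PiM_I) (auto simp: finJ I_def)
    have "emeasure ?M E = (\<Prod>j\<in>J. emeasure ?N (I j))"
      unfolding E_def noise_space_def
      by (rule emeasure_PiM_emb) (auto simp: finJ I_def prob_space_normal_density)
    moreover have "(\<Prod>j\<in>J. emeasure ?N (I j)) > 0"
    proof -
      interpret pN: prob_space ?N by (rule prob_space_normal_density) simp
      have "emeasure ?N (I j) = ennreal (measure ?N (I j))" for j
        by (rule pN.emeasure_eq_measure)
      moreover have "measure ?N (I j) > 0" for j
        using normal_interval_pos[of "c j - \<delta>" "c j + \<delta>"] \<delta> pN.emeasure_eq_measure[of "I j"]
        unfolding I_def by simp
      ultimately have "(\<Prod>j\<in>J. emeasure ?N (I j)) = ennreal (\<Prod>j\<in>J. measure ?N (I j))"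
        by (simp add: prod_ennreal less_imp_le)
      moreover have "(\<Prod>j\<in>J. measure ?N (I j)) > 0" using \<open>\<And>j. measure ?N (I j) > 0\<close> by (simp add: prod_pos)
      ultimately show ?thesis by simp
    qed
    ultimately have "emeasure ?M E > 0" by simp
    then have mE: "measure ?M E > 0"
      using ns_emeq by (metis ennreal_less_zero_iff)
    have sub: "E \<subseteq> {\<omega> \<in> space ?M. ?X \<omega> \<in> ball z \<rho>}"
    proof
      fix \<omega> assume "\<omega> \<in> E"
      then have co: "\<forall>j\<in>J. \<omega> j \<in> I j" unfolding E_def prod_emb_iff by auto
      have cb: "norm (w \<tau> - proc_w mu \<tau> \<omega>) \<le> real CARD('l) * \<delta>" if "\<tau> < t" for \<tau>
      proof -
        have "norm (w \<tau> - proc_w mu \<tau> \<omega>) \<le> (\<Sum>i\<in>UNIV. \<bar>(w \<tau> - proc_w mu \<tau> \<omega>) $ i\<bar>)" by (rule norm_le_l1_cart)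
        also have "\<dots> \<le> (\<Sum>i\<in>(UNIV::'l set). \<delta>)"
        proof (intro sum_mono)
          fix i :: 'l
          have "(\<tau>, Inl i) \<in> J" using that unfolding J_def by auto
          then have "\<omega> (\<tau>, Inl i) \<in> I (\<tau>, Inl i)" using co by blast
          then show "\<bar>(w \<tau> - proc_w mu \<tau> \<omega>) $ i\<bar> \<le> \<delta>"
            by (auto simp: I_def c_def proc_w_def)
        qed
        finally show ?thesis by simp
      qed
      have "z - ?X \<omega> = (\<Sum>\<tau><t. mat_pow A (t - 1 - \<tau>) *v (G *v (w \<tau> - proc_w mu \<tau> \<omega>)))"
        unfolding zw px_split by (simp add: matrix_vector_mult_diff_distrib sum_subtractf)
      then have "norm (z - ?X \<omega>) \<le> (\<Sum>\<tau><t. norm (mat_pow A (t - 1 - \<tau>) *v (G *v (w \<tau> - proc_w mu \<tau> \<omega>))))"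
        by (simp add: norm_sum)
      also have "\<dots> \<le> (\<Sum>\<tau><t. (real CARD('l) * \<delta>) * Kf \<tau>)"
      proof (intro sum_mono)
        fix \<tau> assume "\<tau> \<in> {..<t}"
        then show "norm (mat_pow A (t - 1 - \<tau>) *v (G *v (w \<tau> - proc_w mu \<tau> \<omega>))) \<le> (real CARD('l) * \<delta>) * Kf \<tau>"
          using Kf(2)[of \<tau> "w \<tau> - proc_w mu \<tau> \<omega>"] cb[of \<tau>] Kf(1)[of \<tau>]
          by (smt (verit, best) lessThan_iff mult_right_mono)
      qed
      also have "\<dots> = S0 * \<delta>" unfolding S0_def by (simp add: sum_distrib_left sum_distrib_right mult_ac)
      finally have "norm (z - ?X \<omega>) < \<rho>" using S0\<delta> by simp
      then show "\<omega> \<in> {\<omega> \<in> space ?M. ?X \<omega> \<in> ball z \<rho>}" by (simp add: ns_space dist_norm)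
    qed
    have "measure ?M E \<le> measure ?M {\<omega> \<in> space ?M. ?X \<omega> \<in> ball z \<rho>}"
      by (intro ns_mono sub px_meas_set) simp
    then show "measure ?M {\<omega> \<in> space ?M. ?X \<omega> \<in> ball z \<rho>} > 0" using mE by simp
  qed
qed



lemma rel_img: "y \<in> rel_bis R `` S \<longleftrightarrow> (\<exists>x\<in>S. R *v x = R *v y)"
  unfolding rel_bis_def by auto

lemma rel_cimg: "x \<in> converse (rel_bis R) `` S \<longleftrightarrow> (\<exists>y\<in>S. R *v y = R *v x)"
  unfolding rel_bis_def Image_iff converse_iff by (auto intro: sym)

lemma rel_subspace: "subspace (rel_bis R)"
  unfolding subspace_def rel_bis_def
  by (auto simp: matrix_vector_right_distrib matrix_vector_mult_scaleR algebra_simps zero_prod_def)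

lemma key_set:
  fixes R :: "real^'n^'r"
  assumes V: "subspace V" and VK: "V \<inter> ker_mat R = {0}"
    and Xa: "Xa \<in> (\<lambda>v. m + v) ` V" and RX: "R *v Xa = R *v Xb"
  shows "(\<exists>x \<in> X \<inter> ((\<lambda>v. m + v) ` V). R *v x = R *v Xb) \<longleftrightarrow> Xa \<in> X"
proof
  assume "\<exists>x \<in> X \<inter> ((\<lambda>v. m + v) ` V). R *v x = R *v Xb"
  then obtain x where x: "x \<in> X" "x \<in> (\<lambda>v. m + v) ` V" "R *v x = R *v Xb" by blast
  obtain v where v: "v \<in> V" "Xa = m + v" using Xa by blast
  obtain v' where v': "v' \<in> V" "x = m + v'" using x(2) by blast
  have "x - Xa \<in> V" using v v' subspace_diff[OF V] by simp
  moreover have "x - Xa \<in> ker_mat R" using x(3) RX by (simp add: ker_mat_def matrix_vector_mult_diff_distrib)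
  ultimately have "x - Xa = 0" using VK by blast
  then show "Xa \<in> X" using x(1) by simp
next
  assume "Xa \<in> X" then show "\<exists>x \<in> X \<inter> ((\<lambda>v. m + v) ` V). R *v x = R *v Xb" using Xa RX by blast
qed

lemma Vs_ker:
  fixes A :: "real^'n^'n"
  assumes "ker_mat R \<inter> reach_im A G = {0}"
  shows "Vs A G t \<inter> ker_mat R = {0}"
proof -
  have "0 \<in> Vs A G t" using subspace_0[OF Vs_subspace] .
  moreover have "0 \<in> ker_mat R" by (simp add: ker_mat_def)
  ultimately show ?thesis using assms Vs_le_n[of A G t] unfolding reach_Vs by blast
qed

lemma pow_inv:
  assumes "(\<lambda>x. A *v x) ` K \<subseteq> K" "d \<in> K"
  shows "mat_pow A t *v d \<in> K"
  using assms by (induction t) (auto simp: mat_pow_Suc_vec simp del: mat_pow.simps(2))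

lemma px_diff: "proc_x A B G mu x1 u t \<omega> - proc_x A B G mu x2 u t \<omega> = mat_pow A t *v (x1 - x2)"
  unfolding proc_x_def by (simp add: matrix_vector_mult_diff_distrib)

lemma fwd:
  fixes A :: "real^'n^'n" and B :: "real^'m^'n" and G :: "real^'l^'n"
    and C :: "real^'n^'p" and mu :: "real^'l" and L :: "real^'p^'p"
    and R :: "real^'n^'r"
  assumes inv: "(\<lambda>x. A *v x) ` ker_mat R \<subseteq> ker_mat R" and kc: "ker_mat R \<subseteq> ker_mat C"
    and tr: "ker_mat R \<inter> reach_im A G = {0}"
  shows "stoch_bisim A B G C mu L (rel_bis R)"
  unfolding stoch_bisim_def Let_def
proof (intro conjI rel_subspace allI impI ballI)
  let ?M = "noise_space :: (nat \<times> ('l + 'p) \<Rightarrow> real) measure"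
  fix x1 x2 u t assume x12: "(x1, x2) \<in> rel_bis R"
  let ?X1 = "proc_x A B G mu x1 u t" and ?X2 = "proc_x A B G mu x2 u t"
  have VK: "Vs A G t \<inter> ker_mat R = {0}" by (rule Vs_ker[OF tr])
  have "x1 - x2 \<in> ker_mat R" using x12 by (simp add: rel_bis_def ker_mat_def matrix_vector_mult_diff_distrib)
  then have dK: "mat_pow A t *v (x1 - x2) \<in> ker_mat R" by (rule pow_inv[OF inv])
  have RX: "R *v ?X1 \<omega> = R *v ?X2 \<omega>" for \<omega>
  proof -
    have "R *v (?X1 \<omega> - ?X2 \<omega>) = 0" unfolding px_diff using dK by (simp add: ker_mat_def)
    then show ?thesis by (simp add: matrix_vector_mult_diff_distrib)
  qed
  {
    fix X1 :: "(real^'n) set"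
    have "{\<omega> \<in> space ?M. ?X2 \<omega> \<in> rel_bis R `` (X1 \<inter> rv_supp ?M ?X1)} = {\<omega> \<in> space ?M. ?X1 \<omega> \<in> X1}"
      unfolding rel_img supp_eq
      using key_set[OF Vs_subspace VK px_in RX] by blast
    then show "measure ?M {\<omega> \<in> space ?M. ?X1 \<omega> \<in> X1} = measure ?M {\<omega> \<in> space ?M. ?X2 \<omega> \<in> rel_bis R `` (X1 \<inter> rv_supp ?M ?X1)}"
      by simp
  }
  {
    fix X2 :: "(real^'n) set"
    have "{\<omega> \<in> space ?M. ?X1 \<omega> \<in> converse (rel_bis R) `` (X2 \<inter> rv_supp ?M ?X2)} = {\<omega> \<in> space ?M. ?X2 \<omega> \<in> X2}"
      unfolding rel_cimg supp_eq
      using key_set[OF Vs_subspace VK px_in RX[symmetric]] by blast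
    then show "measure ?M {\<omega> \<in> space ?M. ?X2 \<omega> \<in> X2} = measure ?M {\<omega> \<in> space ?M. ?X1 \<omega> \<in> converse (rel_bis R) `` (X2 \<inter> rv_supp ?M ?X2)}"
      by simp
  }
  have "proc_y A B G C mu L x1 u = proc_y A B G C mu L x2 u"
  proof (intro ext)
    fix s and \<omega> :: "nat \<times> ('l + 'p) \<Rightarrow> real"
    have "mat_pow A s *v (x1 - x2) \<in> ker_mat C" using pow_inv[OF inv, of "x1 - x2" s] \<open>x1 - x2 \<in> ker_mat R\<close> kc by blast
    then have "C *v (proc_x A B G mu x1 u s \<omega> - proc_x A B G mu x2 u s \<omega>) = 0" unfolding px_diff by (simp add: ker_mat_def)
    then show "proc_y A B G C mu L x1 u s \<omega> = proc_y A B G C mu L x2 u s \<omega>"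
      unfolding proc_y_def by (simp add: matrix_vector_mult_diff_distrib)
  qed
  then show "stoch_equiv ?M (proc_y A B G C mu L x1 u) (proc_y A B G C mu L x2 u)"
    by (simp add: stoch_equiv_def)
qed



lemma ns_int_coord: "integrable (noise_space :: (nat \<times> ('l::finite + 'p) \<Rightarrow> real) measure) (\<lambda>\<omega>. \<omega> j)"
proof -
  let ?N = "density lborel std_normal_density"
  let ?M = "noise_space :: (nat \<times> ('l + 'p) \<Rightarrow> real) measure"
  have "integrable lborel (\<lambda>x. std_normal_density x * x ^ 1)" by (rule integrable_std_normal_moment)
  then have intN: "integrable ?N (\<lambda>x. x)"
    by (subst integrable_density) auto
  have deq: "distr ?M ?N (\<lambda>\<omega>. \<omega> j) = ?N"
    unfolding noise_space_def by (rule distr_PiM_component) (auto intro: prob_space_normal_density)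
  have meas: "(\<lambda>\<omega>. \<omega> j) \<in> measurable ?M ?N"
    unfolding noise_space_def using measurable_component_singleton[of j UNIV "\<lambda>_. ?N"] by blast
  have iff: "integrable (distr ?M ?N (\<lambda>\<omega>. \<omega> j)) (\<lambda>x. x) \<longleftrightarrow> integrable ?M (\<lambda>\<omega>. \<omega> j)"
    by (rule integrable_distr_eq[OF meas]) simp
  show ?thesis using iff intN unfolding deq by blast
qed

lemma conv_a:
  fixes A :: "real^'n^'n" and B :: "real^'m^'n" and G :: "real^'l^'n"
    and C :: "real^'n^'p" and mu :: "real^'l" and L :: "real^'p^'p"
    and R :: "real^'n^'r"
  assumes bis: "stoch_bisim A B G C mu L (rel_bis R)"
  shows "ker_mat R \<subseteq> ker_mat C"
proof
  let ?M = "noise_space :: (nat \<times> ('l + 'p) \<Rightarrow> real) measure"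
  let ?P = "PiM {0::nat} (\<lambda>_. borel :: (real^'p) measure)"
  fix k assume k: "k \<in> ker_mat R"
  define u :: "nat \<Rightarrow> real^'m" where "u = (\<lambda>_. 0)"
  have "(k, 0) \<in> rel_bis R" using k by (simp add: rel_bis_def ker_mat_def)
  then have "stoch_equiv ?M (proc_y A B G C mu L k u) (proc_y A B G C mu L 0 u)"
    using bis unfolding stoch_bisim_def Let_def by blast
  then have deq: "distr ?M ?P (\<lambda>\<omega>. \<lambda>t\<in>{0}. proc_y A B G C mu L k u t \<omega>)
      = distr ?M ?P (\<lambda>\<omega>. \<lambda>t\<in>{0}. proc_y A B G C mu L 0 u t \<omega>)"
    unfolding stoch_equiv_def by blast
  define z :: "(nat \<times> ('l + 'p) \<Rightarrow> real) \<Rightarrow> real^'p" where "z = (\<lambda>\<omega>. L *v (\<chi> j. \<omega> (0, Inr j)))"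
  have y0: "proc_y A B G C mu L x u 0 \<omega> = C *v x + z \<omega>" for x \<omega>
    unfolding proc_y_def proc_x_def proc_nu_def z_def by simp
  have zint: "integrable ?M (\<lambda>\<omega>. z \<omega> $ j)" for j
    unfolding z_def matrix_vector_mult_def
    by (simp add: ns_int_coord)
  have ymeas: "(\<lambda>\<omega>. \<lambda>t\<in>{0}. proc_y A B G C mu L x u t \<omega>) \<in> measurable ?M ?P" for x
  proof (rule measurable_restrict)
    fix t :: nat assume "t \<in> {0}"
    show "(\<lambda>\<omega>. proc_y A B G C mu L x u t \<omega>) \<in> borel_measurable ?M"
      unfolding proc_y_def[abs_def] proc_nu_def
      by (intro borel_measurable_add mv_meas proc_x_meas ns_vec)
  qed
  have hmeas: "(\<lambda>\<phi>. \<phi> 0 $ j) \<in> borel_measurable ?P" for j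
  proof -
    have "(\<lambda>\<phi>. \<phi> 0) \<in> measurable ?P (borel :: (real^'p) measure)"
      using measurable_component_singleton[of 0 "{0::nat}" "\<lambda>_. borel :: (real^'p) measure"] by simp
    then show ?thesis by (rule measurable_compose) simp
  qed
  have int_y: "integral\<^sup>L ?M (\<lambda>\<omega>. proc_y A B G C mu L x u 0 \<omega> $ j) = (C *v x) $ j + integral\<^sup>L ?M (\<lambda>\<omega>. z \<omega> $ j)" for x j
  proof -
    interpret prob_space ?M by (rule ns_prob)
    show ?thesis unfolding y0 using zint[of j] by (simp add: integral_add prob_space)
  qed
  show "k \<in> ker_mat C"
  proof -
    have "(C *v k) $ j = 0" for j
    proof -
      have "integral\<^sup>L (distr ?M ?P (\<lambda>\<omega>. \<lambda>t\<in>{0}. proc_y A B G C mu L k u t \<omega>)) (\<lambda>\<phi>. \<phi> 0 $ j)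
          = integral\<^sup>L (distr ?M ?P (\<lambda>\<omega>. \<lambda>t\<in>{0}. proc_y A B G C mu L 0 u t \<omega>)) (\<lambda>\<phi>. \<phi> 0 $ j)"
        using deq by simp
      then have "integral\<^sup>L ?M (\<lambda>\<omega>. proc_y A B G C mu L k u 0 \<omega> $ j) = integral\<^sup>L ?M (\<lambda>\<omega>. proc_y A B G C mu L 0 u 0 \<omega> $ j)"
        by (simp add: integral_distr[OF ymeas hmeas])
      then show ?thesis unfolding int_y by simp
    qed
    then show ?thesis by (simp add: ker_mat_def vec_eq_iff)
  qed
qed



lemma bis_i:
  fixes A :: "real^'n^'n" and B :: "real^'m^'n" and G :: "real^'l^'n"
    and C :: "real^'n^'p" and mu :: "real^'l" and L :: "real^'p^'p"
    and R :: "real^'n^'r"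
  assumes bis: "stoch_bisim A B G C mu L (rel_bis R)" and x12: "(x1, x2) \<in> rel_bis R"
    and X1: "X1 \<in> sets borel"
  shows "measure (noise_space :: (nat \<times> ('l + 'p) \<Rightarrow> real) measure) {\<omega> \<in> space noise_space. proc_x A B G mu x1 u t \<omega> \<in> X1}
       = measure (noise_space :: (nat \<times> ('l + 'p) \<Rightarrow> real) measure) {\<omega> \<in> space noise_space. proc_x A B G mu x2 u t \<omega> \<in> rel_bis R `` (X1 \<inter> rv_supp (noise_space :: (nat \<times> ('l + 'p) \<Rightarrow> real) measure) (proc_x A B G mu x1 u t))}"
proof -
  have dom: "X1 \<subseteq> Domain (rel_bis R)" by (auto simp: rel_bis_def)
  have "\<forall>X1\<in>sets borel. X1 \<subseteq> Domain (rel_bis R) \<longrightarrow>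
      measure (noise_space :: (nat \<times> ('l + 'p) \<Rightarrow> real) measure) {\<omega> \<in> space noise_space. proc_x A B G mu x1 u t \<omega> \<in> X1}
       = measure (noise_space :: (nat \<times> ('l + 'p) \<Rightarrow> real) measure) {\<omega> \<in> space noise_space. proc_x A B G mu x2 u t \<omega> \<in> rel_bis R `` (X1 \<inter> rv_supp (noise_space :: (nat \<times> ('l + 'p) \<Rightarrow> real) measure) (proc_x A B G mu x1 u t))}"
    using bis x12 unfolding stoch_bisim_def Let_def by blast
  then show ?thesis using X1 dom by blast
qed

lemma conv_b:
  fixes A :: "real^'n^'n" and B :: "real^'m^'n" and G :: "real^'l^'n"
    and C :: "real^'n^'p" and mu :: "real^'l" and L :: "real^'p^'p"
    and R :: "real^'n^'r"
  assumes bis: "stoch_bisim A B G C mu L (rel_bis R)"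
  shows "ker_mat R \<inter> reach_im A G = {0}"
proof -
  let ?M = "noise_space :: (nat \<times> ('l + 'p) \<Rightarrow> real) measure"
  interpret P: prob_space ?M by (rule ns_prob)
  have main: "k = 0" if kK: "k \<in> ker_mat R" and kV0: "k \<in> reach_im A G" for k
  proof (rule ccontr)
    assume k0: "k \<noteq> 0"
    define t where "t = CARD('n)"
    define u :: "nat \<Rightarrow> real^'m" where "u = (\<lambda>_. 0)"
    define V where "V = Vs A G t"
    define m where "m = mx A B 0 u t"
    define S where "S = (\<lambda>v. m + v) ` V"
    define X :: "(nat \<times> ('l + 'p) \<Rightarrow> real) \<Rightarrow> real^'n" where "X = proc_x A B G mu 0 u t"
    have kV: "k \<in> V" using kV0 unfolding V_def t_def reach_Vs .
    have subV: "subspace V" unfolding V_def by (rule Vs_subspace)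
    define X1 where "X1 = S \<inter> {z. k \<bullet> z = k \<bullet> m}"
    have "closed S" unfolding S_def V_def by (rule closed_translation[OF Vs_closed])
    then have "closed X1" unfolding X1_def by (intro closed_Int closed_hyperplane)
    then have X1b: "X1 \<in> sets borel" by (rule borel_closed)
    have supp: "rv_supp ?M X = S" unfolding X_def S_def m_def V_def by (rule supp_eq)
    have Xin: "X \<omega> \<in> S" for \<omega> unfolding X_def S_def m_def V_def by (rule px_in)
    have rel00: "(0, 0) \<in> rel_bis R" by (simp add: rel_bis_def)
    have eq: "measure ?M {\<omega> \<in> space ?M. X \<omega> \<in> X1} = measure ?M {\<omega> \<in> space ?M. X \<omega> \<in> rel_bis R `` (X1 \<inter> rv_supp ?M X)}"
      unfolding X_def by (rule bis_i[OF bis rel00 X1b])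
    have all: "{\<omega> \<in> space ?M. X \<omega> \<in> rel_bis R `` (X1 \<inter> rv_supp ?M X)} = space ?M"
    proof (intro set_eqI iffI)
      fix \<omega> assume "\<omega> \<in> space ?M"
      obtain v where v: "v \<in> V" "X \<omega> = m + v" using Xin[of \<omega>] unfolding S_def by blast
      define lam where "lam = (k \<bullet> v) / (k \<bullet> k)"
      define y where "y = m + (v - lam *\<^sub>R k)"
      have kk: "k \<bullet> k \<noteq> 0" using k0 by simp
      have "v - lam *\<^sub>R k \<in> V" using subspace_diff[OF subV v(1) subspace_scale[OF subV kV]] .
      then have yS: "y \<in> S" unfolding y_def S_def by blast
      have "k \<bullet> y = k \<bullet> m" unfolding y_def lam_def using kk by (simp add: inner_diff_right inner_add_right)
      then have yX1: "y \<in> X1" using yS unfolding X1_def by blast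
      have "R *v y = R *v X \<omega>"
        using kK unfolding y_def v(2) ker_mat_def by (simp add: matrix_vector_right_distrib matrix_vector_mult_diff_distrib matrix_vector_mult_scaleR)
      then have "X \<omega> \<in> rel_bis R `` (X1 \<inter> rv_supp ?M X)" unfolding rel_img supp using yX1 yS by blast
      then show "\<omega> \<in> {\<omega> \<in> space ?M. X \<omega> \<in> rel_bis R `` (X1 \<inter> rv_supp ?M X)}" using \<open>\<omega> \<in> space ?M\<close> by blast
    qed auto
    define Eb where "Eb = {\<omega> \<in> space ?M. X \<omega> \<in> ball (m + k) (norm k / 2)}"
    have "m + k \<in> rv_supp ?M X" unfolding supp S_def using kV by blast
    then have mEb: "measure ?M Eb > 0" unfolding Eb_def rv_supp_def using k0 by (simp del: mem_ball)
    have Ebs: "Eb \<in> sets ?M" unfolding Eb_def X_def by (rule px_meas_set) simp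
    have sub: "{\<omega> \<in> space ?M. X \<omega> \<in> X1} \<subseteq> space ?M - Eb"
    proof
      fix \<omega> assume a: "\<omega> \<in> {\<omega> \<in> space ?M. X \<omega> \<in> X1}"
      have "\<omega> \<notin> Eb"
      proof
        assume "\<omega> \<in> Eb"
        then have d: "norm (X \<omega> - (m + k)) < norm k / 2" unfolding Eb_def by (simp add: dist_norm norm_minus_commute)
        have "k \<bullet> X \<omega> = k \<bullet> m" using a unfolding X1_def by blast
        then have "k \<bullet> (X \<omega> - (m + k)) = - (k \<bullet> k)" by (simp add: inner_diff_right inner_add_right)
        moreover have "\<bar>k \<bullet> (X \<omega> - (m + k))\<bar> \<le> norm k * norm (X \<omega> - (m + k))" by (rule Cauchy_Schwarz_ineq2)
        moreover have "norm k * norm (X \<omega> - (m + k)) \<le> norm k * (norm k / 2)" using d by (intro mult_left_mono) auto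
        ultimately have "norm k * norm k \<le> norm k * (norm k / 2)" by (simp add: dot_square_norm power2_eq_square)
        then show False using k0 by simp
      qed
      then show "\<omega> \<in> space ?M - Eb" using a by blast
    qed
    have "measure ?M {\<omega> \<in> space ?M. X \<omega> \<in> X1} \<le> measure ?M (space ?M - Eb)"
      by (rule P.finite_measure_mono[OF sub]) (use Ebs in auto)
    also have "\<dots> = 1 - measure ?M Eb" using Ebs by (simp add: P.prob_compl)
    finally have "measure ?M {\<omega> \<in> space ?M. X \<omega> \<in> X1} < 1" using mEb by simp
    then show False using eq all by (simp add: P.prob_space)
  qed
  show ?thesis
  proof
    show "ker_mat R \<inter> reach_im A G \<subseteq> {0}" using main by blast
    have "0 \<in> reach_im A G" unfolding reach_Vs by (rule subspace_0[OF Vs_subspace])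
    then show "{0} \<subseteq> ker_mat R \<inter> reach_im A G" by (simp add: ker_mat_def)
  qed
qed



lemma conv_c:
  fixes A :: "real^'n^'n" and B :: "real^'m^'n" and G :: "real^'l^'n"
    and C :: "real^'n^'p" and mu :: "real^'l" and L :: "real^'p^'p"
    and R :: "real^'n^'r"
  assumes bis: "stoch_bisim A B G C mu L (rel_bis R)"
  shows "(\<lambda>x. A *v x) ` ker_mat R \<subseteq> ker_mat R"
proof -
  let ?M = "noise_space :: (nat \<times> ('l + 'p) \<Rightarrow> real) measure"
  interpret P: prob_space ?M by (rule ns_prob)
  define V where "V = Vs A G 1"
  have subV: "subspace V" unfolding V_def by (rule Vs_subspace)
  have VK: "V \<inter> ker_mat R = {0}" unfolding V_def by (rule Vs_ker[OF conv_b[OF bis]])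
  have main: "A *v k \<in> ker_mat R" if kK: "k \<in> ker_mat R" for k
  proof (rule ccontr)
    assume aK: "A *v k \<notin> ker_mat R"
    define a where "a = A *v k"
    define u :: "nat \<Rightarrow> real^'m" where "u = (\<lambda>_. 0)"
    define m1 where "m1 = mx A B k u 1"
    define m2 where "m2 = mx A B 0 u 1"
    define S1 where "S1 = (\<lambda>v. m1 + v) ` V"
    define X1p :: "(nat \<times> ('l + 'p) \<Rightarrow> real) \<Rightarrow> real^'n" where "X1p = proc_x A B G mu k u 1"
    define X2p :: "(nat \<times> ('l + 'p) \<Rightarrow> real) \<Rightarrow> real^'n" where "X2p = proc_x A B G mu 0 u 1"
    have hX: "X1p \<omega> = X2p \<omega> + a" for \<omega>
      using px_diff[of A B G mu k u 1 \<omega> 0] unfolding X1p_def X2p_def a_def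
      by (simp add: algebra_simps)
    have hm: "m1 = m2 + a" unfolding m1_def m2_def mx_def a_def by simp
    have X1in: "X1p \<omega> \<in> S1" for \<omega> unfolding X1p_def S1_def m1_def V_def by (rule px_in)
    have X2in: "X2p \<omega> \<in> (\<lambda>v. m2 + v) ` V" for \<omega> unfolding X2p_def m2_def V_def by (rule px_in)
    have supp: "rv_supp ?M X1p = S1" unfolding X1p_def S1_def m1_def V_def by (rule supp_eq)
    have rel: "(k, 0) \<in> rel_bis R" using kK by (simp add: rel_bis_def ker_mat_def)
    have clS1: "closed S1" unfolding S1_def V_def by (rule closed_translation[OF Vs_closed])
    show False
    proof (cases "\<exists>\<kappa> v. \<kappa> \<in> ker_mat R \<and> v \<in> V \<and> a = \<kappa> + v")
      case False
      have eq: "measure ?M {\<omega> \<in> space ?M. X1p \<omega> \<in> UNIV} = measure ?M {\<omega> \<in> space ?M. X2p \<omega> \<in> rel_bis R `` (UNIV \<inter> rv_supp ?M X1p)}"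
        unfolding X1p_def X2p_def by (rule bis_i[OF bis rel]) simp
      have emp: "{\<omega> \<in> space ?M. X2p \<omega> \<in> rel_bis R `` (UNIV \<inter> rv_supp ?M X1p)} = {}"
      proof -
        have "X2p \<omega> \<notin> rel_bis R `` (UNIV \<inter> rv_supp ?M X1p)" for \<omega>
        proof
          assume "X2p \<omega> \<in> rel_bis R `` (UNIV \<inter> rv_supp ?M X1p)"
          then obtain y where y: "y \<in> S1" "R *v y = R *v X2p \<omega>" unfolding rel_img supp by blast
          obtain v1 where v1: "v1 \<in> V" "y = m1 + v1" using y(1) unfolding S1_def by blast
          obtain v2 where v2: "v2 \<in> V" "X2p \<omega> = m2 + v2" using X2in[of \<omega>] by blast
          have "y - X2p \<omega> \<in> ker_mat R" using y(2) by (simp add: ker_mat_def matrix_vector_mult_diff_distrib)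
          moreover have "v2 - v1 \<in> V" using subspace_diff[OF subV v2(1) v1(1)] .
          moreover have "a = (y - X2p \<omega>) + (v2 - v1)" using v1 v2 hm by simp
          ultimately show False using False by blast
        qed
        then show ?thesis by blast
      qed
      have one: "measure ?M {\<omega> \<in> space ?M. X1p \<omega> \<in> UNIV} = 1" by (simp add: P.prob_space)
      show False using eq emp one by (metis measure_empty zero_neq_one)
    next
      case True
      then obtain \<kappa> v where kv: "\<kappa> \<in> ker_mat R" "v \<in> V" "a = \<kappa> + v" by blast
      have v0: "v \<noteq> 0" using kv aK unfolding a_def by auto
      define X1 where "X1 = S1 \<inter> {z. v \<bullet> z \<ge> v \<bullet> m1}"
      have clX1: "closed X1" unfolding X1_def by (intro closed_Int clS1 closed_halfspace_ge)
      have X1b: "X1 \<in> sets borel" using clX1 by (rule borel_closed)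
      have X1'eq: "{z. z - v \<in> X1} = (\<lambda>x. v + x) ` X1"
        by (auto simp: image_iff intro!: bexI[of _ "_ - v"])
      have X1'b: "{z. z - v \<in> X1} \<in> sets borel" unfolding X1'eq
        by (rule borel_closed, rule closed_translation[OF clX1])
      define E0 where "E0 = {\<omega> \<in> space ?M. X1p \<omega> \<in> X1}"
      define E1 where "E1 = {\<omega> \<in> space ?M. X1p \<omega> \<in> {z. z - v \<in> X1}}"
      have E1s: "E1 \<in> sets ?M" unfolding E1_def X1p_def by (rule px_meas_set[OF X1'b])
      have E0s: "E0 \<in> sets ?M" unfolding E0_def X1p_def by (rule px_meas_set[OF X1b])
      have eq: "measure ?M E0 = measure ?M {\<omega> \<in> space ?M. X2p \<omega> \<in> rel_bis R `` (X1 \<inter> rv_supp ?M X1p)}"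
        unfolding E0_def X1p_def X2p_def by (rule bis_i[OF bis rel X1b])
      have "{\<omega> \<in> space ?M. X2p \<omega> \<in> rel_bis R `` (X1 \<inter> rv_supp ?M X1p)} = E1"
      proof -
        have "X2p \<omega> \<in> rel_bis R `` (X1 \<inter> rv_supp ?M X1p) \<longleftrightarrow> X1p \<omega> - v \<in> X1" for \<omega>
        proof -
          obtain v0 where v0: "v0 \<in> V" "X1p \<omega> = m1 + v0" using X1in[of \<omega>] unfolding S1_def by blast
          have "v0 - v \<in> V" using subspace_diff[OF subV v0(1) kv(2)] .
          then have Xa: "X1p \<omega> - v \<in> (\<lambda>v. m1 + v) ` V" using v0(2) by (auto simp: image_iff intro!: bexI[of _ "v0 - v"])
          have "R *v (X1p \<omega> - v - X2p \<omega>) = 0" using hX[of \<omega>] kv by (simp add: ker_mat_def)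
          then have RX: "R *v (X1p \<omega> - v) = R *v X2p \<omega>" by (simp add: matrix_vector_mult_diff_distrib)
          show ?thesis unfolding rel_img supp S1_def
            using key_set[OF subV VK Xa RX, of X1] by simp
        qed
        then show ?thesis unfolding E1_def by auto
      qed
      with eq have eq2: "measure ?M E0 = measure ?M E1" by simp
      define c where "c = m1 + (1/2) *\<^sub>R v"
      define Eb where "Eb = {\<omega> \<in> space ?M. X1p \<omega> \<in> ball c (norm v / 4)}"
      have Ebs: "Eb \<in> sets ?M" unfolding Eb_def X1p_def by (rule px_meas_set) simp
      have "(1/2) *\<^sub>R v \<in> V" by (rule subspace_scale[OF subV kv(2)])
      then have "c \<in> rv_supp ?M X1p" unfolding supp S1_def c_def by blast
      then have mEb: "measure ?M Eb > 0" unfolding Eb_def rv_supp_def using v0 by (simp del: mem_ball)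
      have vv: "v \<bullet> v > 0" using v0 by simp
      have est: "\<bar>v \<bullet> X1p \<omega> - v \<bullet> m1 - (v \<bullet> v) / 2\<bar> \<le> (v \<bullet> v) / 4" if "\<omega> \<in> Eb" for \<omega>
      proof -
        have d: "norm (X1p \<omega> - c) < norm v / 4" using that unfolding Eb_def by (simp add: dist_norm norm_minus_commute)
        have "v \<bullet> X1p \<omega> - v \<bullet> m1 - (v \<bullet> v) / 2 = v \<bullet> (X1p \<omega> - c)" unfolding c_def
          by (simp add: inner_diff_right inner_add_right)
        also have "\<bar>\<dots>\<bar> \<le> norm v * norm (X1p \<omega> - c)" by (rule Cauchy_Schwarz_ineq2)
        also have "\<dots> \<le> norm v * (norm v / 4)" using d by (intro mult_left_mono) auto
        also have "\<dots> = (v \<bullet> v) / 4" by (simp add: dot_square_norm power2_eq_square)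
        finally show ?thesis .
      qed
      have E1E0: "E1 \<subseteq> E0"
      proof
        fix \<omega> assume "\<omega> \<in> E1"
        then have "v \<bullet> (X1p \<omega> - v) \<ge> v \<bullet> m1" "\<omega> \<in> space ?M" unfolding E1_def X1_def by auto
        then have "v \<bullet> m1 \<le> v \<bullet> X1p \<omega> - v \<bullet> v" by (simp add: inner_diff_right)
        then have "v \<bullet> X1p \<omega> \<ge> v \<bullet> m1" using vv by linarith
        then show "\<omega> \<in> E0" using X1in[of \<omega>] \<open>\<omega> \<in> space ?M\<close> unfolding E0_def X1_def by blast
      qed
      have EbE0: "Eb \<subseteq> E0"
      proof
        fix \<omega> assume w: "\<omega> \<in> Eb"
        have "v \<bullet> X1p \<omega> \<ge> v \<bullet> m1" using est[OF w] vv by linarith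
        then show "\<omega> \<in> E0" using X1in[of \<omega>] w unfolding E0_def X1_def Eb_def by blast
      qed
      have disj: "E1 \<inter> Eb = {}"
      proof (rule ccontr)
        assume "E1 \<inter> Eb \<noteq> {}"
        then obtain \<omega> where w: "\<omega> \<in> E1" "\<omega> \<in> Eb" by blast
        then have "v \<bullet> (X1p \<omega> - v) \<ge> v \<bullet> m1" unfolding E1_def X1_def by auto
        then have "v \<bullet> X1p \<omega> - v \<bullet> m1 \<ge> v \<bullet> v" by (simp add: inner_diff_right)
        then show False using est[OF w(2)] vv by linarith
      qed
      have "measure ?M E1 + measure ?M Eb = measure ?M (E1 \<union> Eb)"
        using P.finite_measure_Union[OF E1s Ebs disj] by simp
      also have "\<dots> \<le> measure ?M E0" using E1E0 EbE0 E0s by (intro P.finite_measure_mono) auto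
      finally show False using eq2 mEb by simp
    qed
  qed
  show ?thesis using main by blast
qed


theorem proposition6:
  fixes A :: "real^'n^'n" and B :: "real^'m^'n" and G :: "real^'l^'n"
    and C :: "real^'n^'p" and mu :: "real^'l" and L :: "real^'p^'p"
    and R :: "real^'n^'r"
  assumes "Domain (rel_bis R) = UNIV" and "Range (rel_bis R) = UNIV"
  shows "stoch_bisim A B G C mu L (rel_bis R) \<longleftrightarrow>
    ((\<lambda>x. A *v x) ` ker_mat R \<subseteq> ker_mat R \<and> ker_mat R \<subseteq> ker_mat C
     \<and> ker_mat R \<inter> reach_im A G = {0})"
proof
  assume bis: "stoch_bisim A B G C mu L (rel_bis R)"
  show "(\<lambda>x. A *v x) ` ker_mat R \<subseteq> ker_mat R \<and> ker_mat R \<subseteq> ker_mat C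
     \<and> ker_mat R \<inter> reach_im A G = {0}"
    using conv_a[OF bis] conv_b[OF bis] conv_c[OF bis] by blast
next
  assume "(\<lambda>x. A *v x) ` ker_mat R \<subseteq> ker_mat R \<and> ker_mat R \<subseteq> ker_mat C
     \<and> ker_mat R \<inter> reach_im A G = {0}"
  then show "stoch_bisim A B G C mu L (rel_bis R)" by (elim conjE) (rule fwd)
qed

end
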